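(* Let $X=\{a,a+1,\dots,b\}\subseteq\mathbb{N}$ and let $f^\alpha:\mathcal{P}^n\to X$ be the median voter scheme with fixed ballots $\alpha=(\alpha_1,\dots,\alpha_{n-1})\in X^{n-1}$, $\alpha_1\le\dots\le\alpha_{n-1}$. Then $f^\alpha$ is NOM if and only if $\alpha_1\in\{a,a+1\}$ and $\alpha_{n-1}\in\{b-1,b\}$.
   Context: $N=\{1,\dots,n\}$, $n\ge2$; $X=\{a,a+1,\dots,b\}$ with $b=a+(m-1)$, $m\ge2$; $\mathcal{P}$ is the set of all strict linear orders on $X$ (not necessarily single-peaked); $t(P_i)$ the top of $P_i$. The median voter scheme is $f^\alpha(P)=\mathrm{med}\{t(P_1),\dots,t(P_n),\alpha_1,\dots,\alpha_{n-1}\}$, the median of these $2n-1$ numbers. Option set $O(P_i)=\{f(P_i,P_{-i}):P_{-i}\in\mathcal{P}^{n-1}\}$. $P_i'$ is a manipulation of $f$ at $P_i$ if $f(P_i',P_{-i})P_if(P_i,P_{-i})$ for some $P_{-i}$; it is obvious if the $P_i$-worst element of $O(P_i')$ is strictly $P_i$-better than the $P_i$-worst element of $O(P_i)$, or the $P_i$-best element of $O(P_i')$ is strictly $P_i$-better than the $P_i$-best element of $O(P_i)$. $f$ is not obviously manipulable (NOM) if it admits no obvious manipulation. *)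

theory Defs
  imports Main
begin

text \<open>A preference is a strict linear order on X, given as a relation:
  (x,y) \<in> P means x is strictly preferred to y.\<close>
definition prefs :: "nat set \<Rightarrow> nat rel set" where
  "prefs X = {P. strict_linear_order_on X P \<and> P \<subseteq> X \<times> X}"

definition profiles :: "nat \<Rightarrow> nat set \<Rightarrow> (nat \<Rightarrow> nat rel) set" where
  "profiles n X = {P. (\<forall>i\<in>{1..n}. P i \<in> prefs X) \<and> (\<forall>i. i \<notin> {1..n} \<longrightarrow> P i = {})}"

definition best :: "nat rel \<Rightarrow> nat set \<Rightarrow> nat" where
  "best P S = (THE x. x \<in> S \<and> (\<forall>y\<in>S. y \<noteq> x \<longrightarrow> (x, y) \<in> P))"

definition worst :: "nat rel \<Rightarrow> nat set \<Rightarrow> nat" where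
  "worst P S = (THE x. x \<in> S \<and> (\<forall>y\<in>S. y \<noteq> x \<longrightarrow> (y, x) \<in> P))"

definition top_of :: "nat set \<Rightarrow> nat rel \<Rightarrow> nat" where
  "top_of X P = best P X"

text \<open>Median of a list (of odd length 2k-1: the k-th smallest element).\<close>
definition med :: "nat list \<Rightarrow> nat" where
  "med xs = sort xs ! (length xs div 2)"

definition mvs :: "nat set \<Rightarrow> nat \<Rightarrow> nat list \<Rightarrow> (nat \<Rightarrow> nat rel) \<Rightarrow> nat" where
  "mvs X n alpha P = med (map (\<lambda>i. top_of X (P i)) [1..<n+1] @ alpha)"

definition option_set :: "nat \<Rightarrow> nat set \<Rightarrow> ((nat \<Rightarrow> nat rel) \<Rightarrow> nat) \<Rightarrow> nat \<Rightarrow> nat rel \<Rightarrow> nat set" where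
  "option_set n X f i Q = {f (P(i := Q)) | P. P \<in> profiles n X}"

definition manipulation :: "nat \<Rightarrow> nat set \<Rightarrow> ((nat \<Rightarrow> nat rel) \<Rightarrow> nat) \<Rightarrow> nat \<Rightarrow> nat rel \<Rightarrow> nat rel \<Rightarrow> bool" where
  "manipulation n X f i Q Q' \<longleftrightarrow> (\<exists>P\<in>profiles n X. (f (P(i := Q')), f (P(i := Q))) \<in> Q)"

definition obvious_manipulation :: "nat \<Rightarrow> nat set \<Rightarrow> ((nat \<Rightarrow> nat rel) \<Rightarrow> nat) \<Rightarrow> nat \<Rightarrow> nat rel \<Rightarrow> nat rel \<Rightarrow> bool" where
  "obvious_manipulation n X f i Q Q' \<longleftrightarrow> manipulation n X f i Q Q' \<and>
     ((worst Q (option_set n X f i Q'), worst Q (option_set n X f i Q)) \<in> Q \<or>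
      (best Q (option_set n X f i Q'), best Q (option_set n X f i Q)) \<in> Q)"

definition NOM :: "nat \<Rightarrow> nat set \<Rightarrow> ((nat \<Rightarrow> nat rel) \<Rightarrow> nat) \<Rightarrow> bool" where
  "NOM n X f \<longleftrightarrow> \<not> (\<exists>i\<in>{1..n}. \<exists>Q\<in>prefs X. \<exists>Q'\<in>prefs X. obvious_manipulation n X f i Q Q')"

end

theory Submission
  imports Defs
begin

lemma pref_props:
  assumes "Q \<in> prefs X"
  shows "trans Q" "\<And>x. (x,x) \<notin> Q" "\<And>x y. x \<in> X \<Longrightarrow> y \<in> X \<Longrightarrow> x \<noteq> y \<Longrightarrow> (x,y) \<in> Q \<or> (y,x) \<in> Q"
    "\<And>x y. (x,y) \<in> Q \<Longrightarrow> (y,x) \<notin> Q" "Q \<subseteq> X \<times> X"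
proof -
  show t: "trans Q" using assms by (simp add: prefs_def strict_linear_order_on_def)
  show i: "\<And>x. (x,x) \<notin> Q" using assms by (simp add: prefs_def strict_linear_order_on_def irrefl_def)
  show "\<And>x y. x \<in> X \<Longrightarrow> y \<in> X \<Longrightarrow> x \<noteq> y \<Longrightarrow> (x,y) \<in> Q \<or> (y,x) \<in> Q"
    using assms by (simp add: prefs_def strict_linear_order_on_def total_on_def)
  show "\<And>x y. (x,y) \<in> Q \<Longrightarrow> (y,x) \<notin> Q" using t i by (meson transD)
  show "Q \<subseteq> X \<times> X" using assms by (simp add: prefs_def)
qed

lemma best_exists:
  assumes "Q \<in> prefs X" "finite S" "S \<noteq> {}" "S \<subseteq> X"
  shows "\<exists>x\<in>S. \<forall>y\<in>S. y \<noteq> x \<longrightarrow> (x,y) \<in> Q"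
  using assms(2,3,4)
proof (induction S rule: finite_ne_induct)
  case (singleton x) then show ?case by auto
next
  case (insert z F)
  then obtain x where x: "x \<in> F" "\<forall>y\<in>F. y \<noteq> x \<longrightarrow> (x,y) \<in> Q" by auto
  have xz: "x \<noteq> z" using x insert by auto
  show ?case
  proof (cases "(z,x) \<in> Q")
    case True
    then have "\<forall>y\<in>insert z F. y \<noteq> z \<longrightarrow> (z,y) \<in> Q"
      using x pref_props(1)[OF assms(1)] by (metis insert_iff transD)
    then show ?thesis by auto
  next
    case False
    then have "(x,z) \<in> Q" using pref_props(3)[OF assms(1), of x z] xz insert x by auto
    then show ?thesis using x by auto
  qed
qed

lemma worst_exists:
  assumes "Q \<in> prefs X" "finite S" "S \<noteq> {}" "S \<subseteq> X"
  shows "\<exists>x\<in>S. \<forall>y\<in>S. y \<noteq> x \<longrightarrow> (y,x) \<in> Q"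
  using assms(2,3,4)
proof (induction S rule: finite_ne_induct)
  case (singleton x) then show ?case by auto
next
  case (insert z F)
  then obtain x where x: "x \<in> F" "\<forall>y\<in>F. y \<noteq> x \<longrightarrow> (y,x) \<in> Q" by auto
  have xz: "x \<noteq> z" using x insert by auto
  show ?case
  proof (cases "(x,z) \<in> Q")
    case True
    then have "\<forall>y\<in>insert z F. y \<noteq> z \<longrightarrow> (y,z) \<in> Q"
      using x pref_props(1)[OF assms(1)] by (metis insert_iff transD)
    then show ?thesis by auto
  next
    case False
    then have "(z,x) \<in> Q" using pref_props(3)[OF assms(1), of x z] xz insert x by auto
    then show ?thesis using x by auto
  qed
qed

lemma best_eq:
  assumes "Q \<in> prefs X" "x \<in> S" "\<forall>y\<in>S. y \<noteq> x \<longrightarrow> (x,y) \<in> Q"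
  shows "best Q S = x"
  unfolding best_def
proof (rule the_equality)
  show "x \<in> S \<and> (\<forall>y\<in>S. y \<noteq> x \<longrightarrow> (x, y) \<in> Q)" using assms by auto
  fix z assume z: "z \<in> S \<and> (\<forall>y\<in>S. y \<noteq> z \<longrightarrow> (z, y) \<in> Q)"
  show "z = x"
  proof (rule ccontr)
    assume "z \<noteq> x"
    then have "(z,x) \<in> Q" "(x,z) \<in> Q" using z assms(2,3) by auto
    then show False using pref_props(4)[OF assms(1)] by blast
  qed
qed

lemma worst_eq:
  assumes "Q \<in> prefs X" "x \<in> S" "\<forall>y\<in>S. y \<noteq> x \<longrightarrow> (y,x) \<in> Q"
  shows "worst Q S = x"
  unfolding worst_def
proof (rule the_equality)
  show "x \<in> S \<and> (\<forall>y\<in>S. y \<noteq> x \<longrightarrow> (y, x) \<in> Q)" using assms by auto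
  fix z assume z: "z \<in> S \<and> (\<forall>y\<in>S. y \<noteq> z \<longrightarrow> (y, z) \<in> Q)"
  show "z = x"
  proof (rule ccontr)
    assume "z \<noteq> x"
    then have "(z,x) \<in> Q" "(x,z) \<in> Q" using z assms(2,3) by auto
    then show False using pref_props(4)[OF assms(1)] by blast
  qed
qed

lemma best_prop:
  assumes "Q \<in> prefs X" "finite S" "S \<noteq> {}" "S \<subseteq> X"
  shows "best Q S \<in> S" "\<forall>y\<in>S. y \<noteq> best Q S \<longrightarrow> (best Q S,y) \<in> Q"
proof -
  obtain x where x: "x \<in> S" "\<forall>y\<in>S. y \<noteq> x \<longrightarrow> (x,y) \<in> Q" using best_exists[OF assms] by blast
  have "best Q S = x" by (rule best_eq[OF assms(1) x])
  then show "best Q S \<in> S" "\<forall>y\<in>S. y \<noteq> best Q S \<longrightarrow> (best Q S,y) \<in> Q" using x by auto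
qed

lemma worst_prop:
  assumes "Q \<in> prefs X" "finite S" "S \<noteq> {}" "S \<subseteq> X"
  shows "worst Q S \<in> S" "\<forall>y\<in>S. y \<noteq> worst Q S \<longrightarrow> (y,worst Q S) \<in> Q"
proof -
  obtain x where x: "x \<in> S" "\<forall>y\<in>S. y \<noteq> x \<longrightarrow> (y,x) \<in> Q" using worst_exists[OF assms] by blast
  have "worst Q S = x" by (rule worst_eq[OF assms(1) x])
  then show "worst Q S \<in> S" "\<forall>y\<in>S. y \<noteq> worst Q S \<longrightarrow> (y,worst Q S) \<in> Q" using x by auto
qed

lemma top_prop:
  assumes "Q \<in> prefs {a..b::nat}" "a \<le> b"
  shows "top_of {a..b} Q \<in> {a..b}" "\<forall>y\<in>{a..b}. y \<noteq> top_of {a..b} Q \<longrightarrow> (top_of {a..b} Q,y) \<in> Q"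
  using best_prop[OF assms(1) finite_atLeastAtMost, of a b] assms(2) unfolding top_of_def by auto

definition pr :: "nat set \<Rightarrow> (nat \<Rightarrow> nat) \<Rightarrow> nat rel" where
  "pr X r = {(u,v). u \<in> X \<and> v \<in> X \<and> r u < r v}"

lemma pr_prefs: "inj_on r X \<Longrightarrow> pr X r \<in> prefs X"
proof -
  assume inj: "inj_on r X"
  have "trans (pr X r)" unfolding pr_def trans_def by auto
  moreover have "irrefl (pr X r)" unfolding pr_def irrefl_def by auto
  moreover have "total_on X (pr X r)"
    unfolding total_on_def pr_def
  proof (intro ballI impI)
    fix x y assume "x \<in> X" "y \<in> X" "x \<noteq> y"
    then have "r x \<noteq> r y" using inj by (meson inj_onD)
    then show "(x, y) \<in> {(u, v). u \<in> X \<and> v \<in> X \<and> r u < r v} \<or> (y, x) \<in> {(u, v). u \<in> X \<and> v \<in> X \<and> r u < r v}"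
      using \<open>x \<in> X\<close> \<open>y \<in> X\<close> by auto
  qed
  moreover have "pr X r \<subseteq> X \<times> X" unfolding pr_def by auto
  ultimately show ?thesis unfolding prefs_def strict_linear_order_on_def by auto
qed

lemma pr_top:
  assumes "inj_on r {a..b::nat}" "a \<le> b" "x \<in> {a..b}" "\<forall>y\<in>{a..b}. y \<noteq> x \<longrightarrow> r x < r y"
  shows "top_of {a..b} (pr {a..b} r) = x"
  unfolding top_of_def using assms by (intro best_eq[OF pr_prefs[OF assms(1)]]) (auto simp: pr_def)


lemma len_filter_sort: "length (filter P (sort xs)) = length (filter P (xs::nat list))"
  by (simp add: filter_sort)

lemma med_le:
  assumes "length xs = 2*k - 1" "k \<ge> 1" "k \<le> length (filter (\<lambda>x. x \<le> v) xs)"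
  shows "med xs \<le> v"
proof (rule ccontr)
  let ?ys = "sort xs"
  have j: "length xs div 2 = k - 1" using assms(1,2) by simp
  assume "\<not> med xs \<le> v"
  then have gt: "?ys ! (k-1) > v" unfolding med_def j by simp
  have "{l. l < length ?ys \<and> ?ys ! l \<le> v} \<subseteq> {..<k-1}"
  proof
    fix l assume l: "l \<in> {l. l < length ?ys \<and> ?ys ! l \<le> v}"
    show "l \<in> {..<k-1}"
    proof (rule ccontr)
      assume "l \<notin> {..<k-1}"
      then have "?ys ! (k-1) \<le> ?ys ! l" using l by (intro sorted_nth_mono) auto
      then show False using l gt by auto
    qed
  qed
  then have "card {l. l < length ?ys \<and> ?ys ! l \<le> v} \<le> k - 1"
    by (metis card_lessThan card_mono finite_lessThan)
  then have "length (filter (\<lambda>x. x \<le> v) ?ys) \<le> k - 1" by (simp add: length_filter_conv_card)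
  then show False using assms(2,3) len_filter_sort[of "\<lambda>x. x \<le> v" xs] by simp
qed

lemma med_ge:
  assumes "length xs = 2*k - 1" "k \<ge> 1" "k \<le> length (filter (\<lambda>x. v \<le> x) xs)"
  shows "v \<le> med xs"
proof (rule ccontr)
  let ?ys = "sort xs"
  have j: "length xs div 2 = k - 1" using assms(1,2) by simp
  assume "\<not> v \<le> med xs"
  then have gt: "?ys ! (k-1) < v" unfolding med_def j by simp
  have "{l. l < length ?ys \<and> v \<le> ?ys ! l} \<subseteq> {k-1<..<length ?ys}"
  proof
    fix l assume l: "l \<in> {l. l < length ?ys \<and> v \<le> ?ys ! l}"
    show "l \<in> {k-1<..<length ?ys}"
    proof (rule ccontr)
      assume "l \<notin> {k-1<..<length ?ys}"
      then have "?ys ! l \<le> ?ys ! (k-1)" using l assms(1,2) by (intro sorted_nth_mono) auto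
      then show False using l gt by auto
    qed
  qed
  then have "card {l. l < length ?ys \<and> v \<le> ?ys ! l} \<le> card {k-1<..<length ?ys}"
    by (intro card_mono) auto
  also have "\<dots> = k - 1" using assms(1,2) by simp
  finally have "length (filter (\<lambda>x. v \<le> x) ?ys) \<le> k - 1" by (simp add: length_filter_conv_card)
  then show False using assms(2,3) len_filter_sort[of "\<lambda>x. v \<le> x" xs] by simp
qed

lemma med_in: "xs \<noteq> [] \<Longrightarrow> med xs \<in> set xs"
  unfolding med_def by (metis div_less_dividend length_greater_0_conv length_sort nth_mem one_less_numeral_iff semiring_norm(76) set_sort)

lemma len_filter_map_upt:
  "length (filter P (map g [1..<n+1])) = card {j\<in>{1..n}. P (g j)}"
proof -
  have "length (filter P (map g [1..<n+1])) = length (filter (P \<circ> g) [1..<n+1])"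
    by (simp add: filter_map)
  also have "\<dots> = card (set (filter (P \<circ> g) [1..<n+1]))"
    by (intro distinct_card[symmetric] distinct_filter distinct_upt)
  also have "set (filter (P \<circ> g) [1..<n+1]) = {j\<in>{1..n}. P (g j)}" by auto
  finally show ?thesis .
qed


lemma len_filter_L:
  "length (filter P (map g [1..<n+1] @ alpha)) = card {j\<in>{1..n}. P (g j)} + length (filter P alpha)"
  unfolding filter_append length_append len_filter_map_upt ..

lemma card_ge1: "i \<in> {j\<in>{1..n::nat}. P j} \<Longrightarrow> 1 \<le> card {j\<in>{1..n}. P j}"
proof -
  assume i: "i \<in> {j\<in>{1..n::nat}. P j}"
  have "card {i} \<le> card {j\<in>{1..n}. P j}" by (rule card_mono) (use i in auto)
  then show ?thesis by simp
qed

lemma alpha_bounds: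
  assumes "n \<ge> 2" "length alpha = n - 1" "sorted alpha" "y \<in> set alpha"
  shows "alpha ! 0 \<le> y" "y \<le> alpha ! (n-2)"
proof -
  obtain k where k: "k < length alpha" "y = alpha ! k" using assms(4) by (metis in_set_conv_nth)
  show "alpha ! 0 \<le> y" using k assms(3) by (simp add: sorted_nth_mono)
  have "k \<le> n-2" "n-2 < length alpha" using k assms(1,2) by auto
  then show "y \<le> alpha ! (n-2)" using k sorted_nth_mono[OF assms(3)] by simp
qed

lemma prof_pref: "P \<in> profiles n X \<Longrightarrow> j \<in> {1..n} \<Longrightarrow> P j \<in> prefs X"
  by (simp add: profiles_def)

lemma card_minus_i: "i \<in> {1..n} \<Longrightarrow> {1..n} - {i} \<subseteq> A \<Longrightarrow> A \<subseteq> {1..(n::nat)} \<Longrightarrow> n - 1 \<le> card A"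
  by (metis card_Diff_singleton card_atLeastAtMost card_mono diff_Suc_1 finite_atLeastAtMost finite_subset)

lemma outcome_bounds:
  assumes "n \<ge> 2" "a < b" "length alpha = n-1" "sorted alpha" "set alpha \<subseteq> {a..b}"
   "i \<in> {1..n}" "P \<in> profiles n {a..b}" "Q \<in> prefs {a..b}"
  shows "mvs {a..b} n alpha (P(i:=Q)) \<in> {a..b}"
   "min (top_of {a..b} Q) (alpha!0) \<le> mvs {a..b} n alpha (P(i:=Q))"
   "mvs {a..b} n alpha (P(i:=Q)) \<le> max (top_of {a..b} Q) (alpha!(n-2))"
proof -
  define g where "g j = top_of {a..b} ((P(i:=Q)) j)" for j
  define L where "L = map g [1..<n+1] @ alpha"
  have m: "mvs {a..b} n alpha (P(i:=Q)) = med L" unfolding mvs_def L_def g_def by simp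
  have len: "length L = 2*n - 1" using assms(1,3) unfolding L_def by simp
  have gi: "g i = top_of {a..b} Q" unfolding g_def by simp
  have gX: "g j \<in> {a..b}" if "j \<in> {1..n}" for j
  proof (cases "j = i")
    case True then show ?thesis using top_prop[OF assms(8)] assms(2) gi by auto
  next
    case False then show ?thesis unfolding g_def using top_prop[OF prof_pref[OF assms(7) that]] assms(2) by auto
  qed
  have "set L \<subseteq> {a..b}" unfolding L_def using gX assms(5) by auto
  moreover have "L \<noteq> []" using len assms(1) by auto
  then have "med L \<in> set L" by (rule med_in)
  ultimately show "mvs {a..b} n alpha (P(i:=Q)) \<in> {a..b}" unfolding m by blast
  have ab: "\<And>y. y \<in> set alpha \<Longrightarrow> alpha ! 0 \<le> y \<and> y \<le> alpha ! (n-2)"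
    using alpha_bounds[OF assms(1,3,4)] by auto
  let ?M = "max (top_of {a..b} Q) (alpha!(n-2))"
  have "1 \<le> card {j\<in>{1..n}. g j \<le> ?M}"
  proof -
    have "i \<in> {j\<in>{1..n}. g j \<le> ?M}" using assms(6) gi by auto
    then show ?thesis by (rule card_ge1)
  qed
  moreover have "filter (\<lambda>x. x \<le> ?M) alpha = alpha" by (rule filter_True) (meson ab max.coboundedI2)
  ultimately have "n \<le> length (filter (\<lambda>x. x \<le> ?M) L)" unfolding L_def len_filter_L
    using assms(1,3) by simp
  then show "mvs {a..b} n alpha (P(i:=Q)) \<le> ?M" unfolding m using med_le[OF len] assms(1) by simp
  let ?m = "min (top_of {a..b} Q) (alpha!0)"
  have "1 \<le> card {j\<in>{1..n}. ?m \<le> g j}"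
  proof -
    have "i \<in> {j\<in>{1..n}. ?m \<le> g j}" using assms(6) gi by auto
    then show ?thesis by (rule card_ge1)
  qed
  moreover have "filter (\<lambda>x. ?m \<le> x) alpha = alpha" by (rule filter_True) (meson ab min.coboundedI2)
  ultimately have "n \<le> length (filter (\<lambda>x. ?m \<le> x) L)" unfolding L_def len_filter_L
    using assms(1,3) by simp
  then show "?m \<le> mvs {a..b} n alpha (P(i:=Q))" unfolding m using med_ge[OF len] assms(1) by simp
qed

lemma outcome_exact:
  assumes "n \<ge> 2" "a < b" "length alpha = n-1" "sorted alpha" "set alpha \<subseteq> {a..b}"
   "i \<in> {1..n}" "P \<in> profiles n {a..b}" "Q \<in> prefs {a..b}"
   "\<forall>j\<in>{1..n}. j \<noteq> i \<longrightarrow> top_of {a..b} (P j) = x"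
   "min (top_of {a..b} Q) (alpha!0) \<le> x" "x \<le> max (top_of {a..b} Q) (alpha!(n-2))"
  shows "mvs {a..b} n alpha (P(i:=Q)) = x"
proof -
  define g where "g j = top_of {a..b} ((P(i:=Q)) j)" for j
  define L where "L = map g [1..<n+1] @ alpha"
  have m: "mvs {a..b} n alpha (P(i:=Q)) = med L" unfolding mvs_def L_def g_def by simp
  have len: "length L = 2*n - 1" using assms(1,3) unfolding L_def by simp
  have gi: "g i = top_of {a..b} Q" unfolding g_def by simp
  have go: "g j = x" if "j \<in> {1..n}" "j \<noteq> i" for j using assms(9) that unfolding g_def by simp
  have ab: "\<And>y. y \<in> set alpha \<Longrightarrow> alpha ! 0 \<le> y \<and> y \<le> alpha ! (n-2)"
    using alpha_bounds[OF assms(1,3,4)] by auto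
  have a0: "alpha ! 0 \<in> set alpha" "alpha ! (n-2) \<in> set alpha" using assms(1,3) by auto
  have "n \<le> length (filter (\<lambda>y. y \<le> x) L)"
  proof -
    have c1: "n - 1 \<le> card {j\<in>{1..n}. g j \<le> x}"
      by (rule card_minus_i[OF assms(6)]) (auto simp: go)
    show ?thesis
    proof (cases "top_of {a..b} Q \<le> x")
      case True
      then have "\<forall>j\<in>{1..n}. g j \<le> x" using go gi by (metis order_refl)
      then have "{j\<in>{1..n}. g j \<le> x} = {1..n}" by auto
      then show ?thesis unfolding L_def len_filter_L by simp
    next
      case False
      then have "alpha ! 0 \<le> x" using assms(10) by simp
      then have "filter (\<lambda>y. y \<le> x) alpha \<noteq> []" using a0 by (auto simp: filter_empty_conv)
      then have "1 \<le> length (filter (\<lambda>y. y \<le> x) alpha)" by (simp add: Suc_leI)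
      then show ?thesis unfolding L_def len_filter_L using c1 assms(1) by simp
    qed
  qed
  then have le: "med L \<le> x" using med_le[OF len] assms(1) by simp
  have "n \<le> length (filter (\<lambda>y. x \<le> y) L)"
  proof -
    have c1: "n - 1 \<le> card {j\<in>{1..n}. x \<le> g j}"
      by (rule card_minus_i[OF assms(6)]) (auto simp: go)
    show ?thesis
    proof (cases "x \<le> top_of {a..b} Q")
      case True
      then have "\<forall>j\<in>{1..n}. x \<le> g j" using go gi by (metis order_refl)
      then have "{j\<in>{1..n}. x \<le> g j} = {1..n}" by auto
      then show ?thesis unfolding L_def len_filter_L by simp
    next
      case False
      then have "x \<le> alpha ! (n-2)" using assms(11) by simp
      then have "filter (\<lambda>y. x \<le> y) alpha \<noteq> []" using a0 by (auto simp: filter_empty_conv)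
      then have "1 \<le> length (filter (\<lambda>y. x \<le> y) alpha)" by (simp add: Suc_leI)
      then show ?thesis unfolding L_def len_filter_L using c1 assms(1) by simp
    qed
  qed
  then have "x \<le> med L" using med_ge[OF len] assms(1) by simp
  then show ?thesis using le m by simp
qed


definition topx :: "nat \<Rightarrow> nat \<Rightarrow> nat" where "topx x y = (if y = x then 0 else y + 1)"

lemma topx_inj: "inj_on (topx x) X" unfolding topx_def inj_on_def by auto

lemma topx_prefs: "pr X (topx x) \<in> prefs X" by (rule pr_prefs[OF topx_inj])

lemma topx_top: "a \<le> b \<Longrightarrow> x \<in> {a..b} \<Longrightarrow> top_of {a..b} (pr {a..b} (topx x)) = x"
  by (rule pr_top[OF topx_inj]) (auto simp: topx_def)

lemma in_option_set:
  assumes "n \<ge> 2" "a < b" "length alpha = n-1" "sorted alpha" "set alpha \<subseteq> {a..b}"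
   "i \<in> {1..n}" "Q \<in> prefs {a..b}" "x \<in> {a..b}"
   "min (top_of {a..b} Q) (alpha!0) \<le> x" "x \<le> max (top_of {a..b} Q) (alpha!(n-2))"
  shows "x \<in> option_set n {a..b} (mvs {a..b} n alpha) i Q"
proof -
  define P where "P j = (if j \<in> {1..n} then pr {a..b} (topx x) else {})" for j
  have P: "P \<in> profiles n {a..b}" unfolding profiles_def P_def using topx_prefs by auto
  have "mvs {a..b} n alpha (P(i:=Q)) = x"
    by (rule outcome_exact[OF assms(1-6) P assms(7) _ assms(9,10)])
      (use topx_top assms(2,8) in \<open>auto simp: P_def\<close>)
  then show ?thesis unfolding option_set_def using P by blast
qed

lemma option_set_sub:
  assumes "n \<ge> 2" "a < b" "length alpha = n-1" "sorted alpha" "set alpha \<subseteq> {a..b}"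
   "i \<in> {1..n}" "Q \<in> prefs {a..b}" "y \<in> option_set n {a..b} (mvs {a..b} n alpha) i Q"
  shows "y \<in> {a..b}" "min (top_of {a..b} Q) (alpha!0) \<le> y" "y \<le> max (top_of {a..b} Q) (alpha!(n-2))"
  using assms(8) outcome_bounds[OF assms(1-6) _ assms(7)] unfolding option_set_def by auto

lemma option_set_fin:
  assumes "n \<ge> 2" "a < b" "length alpha = n-1" "sorted alpha" "set alpha \<subseteq> {a..b}"
   "i \<in> {1..n}" "Q \<in> prefs {a..b}"
  shows "option_set n {a..b} (mvs {a..b} n alpha) i Q \<subseteq> {a..b}"
    "finite (option_set n {a..b} (mvs {a..b} n alpha) i Q)"
    "alpha ! 0 \<in> option_set n {a..b} (mvs {a..b} n alpha) i Q"
    "option_set n {a..b} (mvs {a..b} n alpha) i Q \<noteq> {}"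
proof -
  show s: "option_set n {a..b} (mvs {a..b} n alpha) i Q \<subseteq> {a..b}"
    using option_set_sub[OF assms] by blast
  then show "finite (option_set n {a..b} (mvs {a..b} n alpha) i Q)" using finite_subset by blast
  have a0: "alpha ! 0 \<in> set alpha" "alpha ! (n-2) \<in> set alpha" using assms(1,3) by auto
  have "alpha ! 0 \<le> alpha ! (n-2)" using alpha_bounds[OF assms(1,3,4) a0(1)] by simp
  then show "alpha ! 0 \<in> option_set n {a..b} (mvs {a..b} n alpha) i Q"
    using in_option_set[OF assms] a0 assms(5) by auto
  then show "option_set n {a..b} (mvs {a..b} n alpha) i Q \<noteq> {}" by blast
qed


lemma bad_low:
  assumes "n \<ge> 2" "a < b" "length alpha = n-1" "sorted alpha" "set alpha \<subseteq> {a..b}"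
    "a + 2 \<le> alpha ! 0"
  shows "\<not> NOM n {a..b} (mvs {a..b} n alpha)"
proof -
  let ?X = "{a..b}" and ?f = "mvs {a..b} n alpha"
  have a0: "alpha ! 0 \<in> set alpha" "alpha ! (n-2) \<in> set alpha" using assms(1,3) by auto
  have lohi: "alpha ! 0 \<le> alpha ! (n-2)" using alpha_bounds[OF assms(1,3,4) a0(1)] by simp
  have loX: "alpha ! 0 \<in> ?X" using a0 assms(5) by auto
  define r where "r y = (if y = a+1 then b+1 else y)" for y
  have rinj: "inj_on r ?X" unfolding inj_on_def r_def by auto
  define Q where "Q = pr ?X r"
  have Q: "Q \<in> prefs ?X" unfolding Q_def by (rule pr_prefs[OF rinj])
  have tQ: "top_of ?X Q = a" unfolding Q_def by (rule pr_top[OF rinj]) (use assms(2) in \<open>auto simp: r_def\<close>)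
  have a1X: "a + 1 \<in> ?X" using loX assms(6) by auto
  have last: "\<And>u. u \<in> ?X \<Longrightarrow> u \<noteq> a+1 \<Longrightarrow> (u, a+1) \<in> Q" using a1X unfolding Q_def pr_def r_def by auto
  define Q' where "Q' = pr ?X (topx (alpha ! 0))"
  have Q': "Q' \<in> prefs ?X" unfolding Q'_def by (rule topx_prefs)
  have tQ': "top_of ?X Q' = alpha ! 0" unfolding Q'_def using topx_top assms(2) loX by simp
  have i1: "(1::nat) \<in> {1..n}" using assms(1) by simp
  define P where "P j = (if j \<in> {1..n} then pr ?X (topx (a+1)) else {})" for j
  have P: "P \<in> profiles n ?X" unfolding profiles_def P_def using topx_prefs by auto
  have e1: "?f (P(1:=Q)) = a+1"
    by (rule outcome_exact[OF assms(1-5) i1 P Q]) (use topx_top assms(2,6) a1X lohi tQ in \<open>auto simp: P_def\<close>)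
  have e2: "alpha ! 0 \<le> ?f (P(1:=Q'))" "?f (P(1:=Q')) \<in> ?X"
    using outcome_bounds[OF assms(1-5) i1 P Q'] tQ' by auto
  have "(?f (P(1:=Q')), ?f (P(1:=Q))) \<in> Q" unfolding e1
    by (rule last) (use e2 assms(6) in auto)
  then have man: "manipulation n ?X ?f 1 Q Q'"
    unfolding manipulation_def using P by blast
  let ?O = "option_set n ?X ?f 1 Q" and ?O' = "option_set n ?X ?f 1 Q'"
  have "a + 1 \<in> ?O" by (rule in_option_set[OF assms(1-5) i1 Q a1X]) (use tQ lohi assms(6) in auto)
  then have w: "worst Q ?O = a + 1"
    using worst_eq[OF Q] option_set_fin(1)[OF assms(1-5) i1 Q] last by blast
  have w'O: "worst Q ?O' \<in> ?O'"
    using worst_prop(1)[OF Q option_set_fin(2,4,1)[OF assms(1-5) i1 Q']] by blast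
  have "alpha ! 0 \<le> worst Q ?O'" "worst Q ?O' \<in> ?X"
    using option_set_sub[OF assms(1-5) i1 Q' w'O] tQ' by auto
  then have "(worst Q ?O', worst Q ?O) \<in> Q" unfolding w using last assms(6) by auto
  then have "obvious_manipulation n ?X ?f 1 Q Q'" unfolding obvious_manipulation_def using man by blast
  then show ?thesis unfolding NOM_def using i1 Q Q' by blast
qed

lemma bad_high:
  assumes "n \<ge> 2" "a < b" "length alpha = n-1" "sorted alpha" "set alpha \<subseteq> {a..b}"
    "alpha ! (n-2) + 2 \<le> b"
  shows "\<not> NOM n {a..b} (mvs {a..b} n alpha)"
proof -
  let ?X = "{a..b}" and ?f = "mvs {a..b} n alpha"
  have a0: "alpha ! 0 \<in> set alpha" "alpha ! (n-2) \<in> set alpha" using assms(1,3) by auto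
  have lohi: "alpha ! 0 \<le> alpha ! (n-2)" using alpha_bounds[OF assms(1,3,4) a0(1)] by simp
  have hiX: "alpha ! (n-2) \<in> ?X" using a0 assms(5) by auto
  define r where "r y = (if y = b-1 then b+1 else b - y)" for y
  have rinj: "inj_on r ?X" unfolding inj_on_def r_def by auto
  define Q where "Q = pr ?X r"
  have Q: "Q \<in> prefs ?X" unfolding Q_def by (rule pr_prefs[OF rinj])
  have tQ: "top_of ?X Q = b" unfolding Q_def by (rule pr_top[OF rinj]) (use assms(2) in \<open>auto simp: r_def\<close>)
  have b1X: "b - 1 \<in> ?X" using assms(2) by auto
  have last: "\<And>u. u \<in> ?X \<Longrightarrow> u \<noteq> b-1 \<Longrightarrow> (u, b-1) \<in> Q" using b1X unfolding Q_def pr_def r_def by auto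
  define Q' where "Q' = pr ?X (topx (alpha ! (n-2)))"
  have Q': "Q' \<in> prefs ?X" unfolding Q'_def by (rule topx_prefs)
  have tQ': "top_of ?X Q' = alpha ! (n-2)" unfolding Q'_def using topx_top assms(2) hiX by simp
  have i1: "(1::nat) \<in> {1..n}" using assms(1) by simp
  define P where "P j = (if j \<in> {1..n} then pr ?X (topx (b-1)) else {})" for j
  have P: "P \<in> profiles n ?X" unfolding profiles_def P_def using topx_prefs by auto
  have e1: "?f (P(1:=Q)) = b-1"
    by (rule outcome_exact[OF assms(1-5) i1 P Q]) (use topx_top assms(2,6) b1X lohi tQ in \<open>auto simp: P_def\<close>)
  have e2: "?f (P(1:=Q')) \<le> alpha ! (n-2)" "?f (P(1:=Q')) \<in> ?X"
    using outcome_bounds[OF assms(1-5) i1 P Q'] tQ' by auto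
  have "(?f (P(1:=Q')), ?f (P(1:=Q))) \<in> Q" unfolding e1
    by (rule last) (use e2 assms(6) in auto)
  then have man: "manipulation n ?X ?f 1 Q Q'"
    unfolding manipulation_def using P by blast
  let ?O = "option_set n ?X ?f 1 Q" and ?O' = "option_set n ?X ?f 1 Q'"
  have "b - 1 \<in> ?O" by (rule in_option_set[OF assms(1-5) i1 Q b1X]) (use tQ lohi assms(6) in auto)
  then have w: "worst Q ?O = b - 1"
    using worst_eq[OF Q] option_set_fin(1)[OF assms(1-5) i1 Q] last by blast
  have w'O: "worst Q ?O' \<in> ?O'"
    using worst_prop(1)[OF Q option_set_fin(2,4,1)[OF assms(1-5) i1 Q']] by blast
  have "worst Q ?O' \<le> alpha ! (n-2)" "worst Q ?O' \<in> ?X"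
    using option_set_sub[OF assms(1-5) i1 Q' w'O] tQ' by auto
  then have "(worst Q ?O', worst Q ?O) \<in> Q" unfolding w using last assms(6) by auto
  then have "obvious_manipulation n ?X ?f 1 Q Q'" unfolding obvious_manipulation_def using man by blast
  then show ?thesis unfolding NOM_def using i1 Q Q' by blast
qed


lemma good:
  assumes "n \<ge> 2" "a < b" "length alpha = n-1" "sorted alpha" "set alpha \<subseteq> {a..b}"
    "alpha ! 0 \<le> a + 1" "b \<le> alpha ! (n-2) + 1"
  shows "NOM n {a..b} (mvs {a..b} n alpha)"
  unfolding NOM_def
proof
  let ?X = "{a..b}" and ?f = "mvs {a..b} n alpha"
  assume "\<exists>i\<in>{1..n}. \<exists>Q\<in>prefs ?X. \<exists>Q'\<in>prefs ?X. obvious_manipulation n ?X ?f i Q Q'"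
  then obtain i Q Q' where i: "i \<in> {1..n}" and Q: "Q \<in> prefs ?X" and Q': "Q' \<in> prefs ?X"
    and om: "obvious_manipulation n ?X ?f i Q Q'" by blast
  let ?O = "option_set n ?X ?f i Q" and ?O' = "option_set n ?X ?f i Q'"
  let ?lo = "alpha ! 0" and ?hi = "alpha ! (n-2)"
  define t where "t = top_of ?X Q"
  define t' where "t' = top_of ?X Q'"
  have a0: "?lo \<in> set alpha" "?hi \<in> set alpha" using assms(1,3) by auto
  have lohi: "?lo \<le> ?hi" using alpha_bounds[OF assms(1,3,4) a0(1)] by simp
  have loX: "?lo \<in> ?X" "?hi \<in> ?X" using a0 assms(5) by auto
  have tX: "t \<in> ?X" and ttop: "\<And>y. y \<in> ?X \<Longrightarrow> y \<noteq> t \<Longrightarrow> (t, y) \<in> Q"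
    using top_prop[OF Q] assms(2) unfolding t_def by auto
  note O = option_set_fin[OF assms(1-5) i Q]
  note O' = option_set_fin[OF assms(1-5) i Q']
  note asym = pref_props(4)[OF Q]
  note irr = pref_props(2)[OF Q]
  have tO: "t \<in> ?O" by (rule in_option_set[OF assms(1-5) i Q tX]) (auto simp: t_def)
  have bO: "best Q ?O = t" using best_eq[OF Q tO] ttop O(1) by blast
  have "best Q ?O' \<in> ?X" using best_prop(1)[OF Q O'(2,4,1)] O'(1) by blast
  then have nb: "(best Q ?O', best Q ?O) \<notin> Q" unfolding bO using ttop asym irr by metis
  define w where "w = worst Q ?O"
  have wO: "w \<in> ?O" and wworst: "\<And>y. y \<in> ?O \<Longrightarrow> y \<noteq> w \<Longrightarrow> (y, w) \<in> Q"
    using worst_prop[OF Q O(2,4,1)] unfolding w_def by auto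
  have wb: "w \<in> ?X" "min t ?lo \<le> w" "w \<le> max t ?hi"
    using option_set_sub[OF assms(1-5) i Q wO] unfolding t_def by auto
  have loO: "?lo \<in> ?O" "?hi \<in> ?O"
    by (rule in_option_set[OF assms(1-5) i Q]; use loX lohi in \<open>auto simp: t_def\<close>)+
  have wlo: "?lo \<le> w"
  proof (rule ccontr)
    assume "\<not> ?lo \<le> w"
    then have "w = a" "t = a" using wb tX assms(6) by auto
    then have "(?lo, t) \<in> Q" "(t, ?lo) \<in> Q" using wworst[OF loO(1)] ttop[OF loX(1)] \<open>\<not> ?lo \<le> w\<close> by auto
    then show False using asym by blast
  qed
  have whi: "w \<le> ?hi"
  proof (rule ccontr)
    assume "\<not> w \<le> ?hi"
    then have "w = b" "t = b" using wb tX assms(7) by auto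
    then have "(?hi, t) \<in> Q" "(t, ?hi) \<in> Q" using wworst[OF loO(2)] ttop[OF loX(2)] \<open>\<not> w \<le> ?hi\<close> by auto
    then show False using asym by blast
  qed
  have wO': "w \<in> ?O'" by (rule in_option_set[OF assms(1-5) i Q' wb(1)]) (use wlo whi in auto)
  have "worst Q ?O' = w \<or> (w, worst Q ?O') \<in> Q" using worst_prop(2)[OF Q O'(2,4,1)] wO' by auto
  then have nw: "(worst Q ?O', worst Q ?O) \<notin> Q" unfolding w_def[symmetric] using asym irr by metis
  show False using om nw nb unfolding obvious_manipulation_def by blast
qed

theorem theorem2:
  fixes n a b :: nat and alpha :: "nat list"
  assumes "n \<ge> 2" and "a < b"
    and "length alpha = n - 1" and "sorted alpha" and "set alpha \<subseteq> {a..b}"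
  shows "NOM n {a..b} (mvs {a..b} n alpha) \<longleftrightarrow>
           (alpha ! 0 \<in> {a, a + 1} \<and> alpha ! (n - 2) \<in> {b - 1, b})"
proof -
  have a0: "alpha ! 0 \<in> set alpha" "alpha ! (n-2) \<in> set alpha" using assms(1,3) by auto
  then have X: "alpha ! 0 \<in> {a..b}" "alpha ! (n-2) \<in> {a..b}" using assms(5) by auto
  show ?thesis
  proof
    assume N: "NOM n {a..b} (mvs {a..b} n alpha)"
    have "\<not> a + 2 \<le> alpha ! 0" using bad_low[OF assms] N by blast
    moreover have "\<not> alpha ! (n-2) + 2 \<le> b" using bad_high[OF assms] N by blast
    ultimately show "alpha ! 0 \<in> {a, a + 1} \<and> alpha ! (n - 2) \<in> {b - 1, b}" using X by auto
  next
    assume "alpha ! 0 \<in> {a, a + 1} \<and> alpha ! (n - 2) \<in> {b - 1, b}"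
    then show "NOM n {a..b} (mvs {a..b} n alpha)" using good[OF assms] by auto
  qed
qed

end
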